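(* Let $SO$ be a semi-overlap function and let $I_{SO}(u,v)=\sup\{w\in[0,1]\mid SO(u,w)\le v\}$ be its residual implication, assumed to be a fuzzy implication. Then: (1) $SO(u,v)=\min\{w\in[0,1]\mid I_{SO}(u,w)\ge v\}$ for all $u,v\in[0,1]$. (2) $I_{SO}$ satisfies (NP) if and only if $1$ is the neutral element of $SO$. (3) $I_{SO}$ satisfies (EP) if and only if $SO$ is associative. (4) $I_{SO}$ satisfies (IP) if and only if $SO(u,1)\le u$ for all $u\in[0,1]$. (5) $I_{SO}$ satisfies (LOP) if and only if $SO(u,1)\le u$ for all $u\in[0,1]$. (6) $I_{SO}$ satisfies (ROP) if and only if $SO(u,1)\ge u$ for all $u\in[0,1]$. (7) $I_{SO}$ satisfies (OP) if and only if $1$ is the neutral element of $SO$. (8) $I_{SO}$ satisfies (CB) if and only if $SO(u,v)\le\min\{u,v\}$ for all $u,v\in[0,1]$. (9) If $I_{SO}$ satisfies (CB), then $I_{SO}$ satisfies (SIB). (10) If $SO(u,v)=\min\{u,v\}$ for all $u,v$, then $I_{SO}$ satisfies (IB). (11) If $SO$ has $1$ as neutral element, then $I_{SO}$ satisfies (CB).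
   Context: A semi-overlap function is a function $SO:[0,1]^2\to[0,1]$ such that for all $u,v\in[0,1]$: (S1) $SO(u,v)=SO(v,u)$; (S2) if $uv=0$ then $SO(u,v)=0$; (S3) if $uv=1$ then $SO(u,v)=1$; (S4) $SO$ is increasing in each variable; (S5) $SO$ is left-continuous, meaning that for every $u\in[0,1]$ and every nonempty family $\{v_i\mid i\in I\}\subseteq[0,1]$, $SO(u,\sup_{i\in I}v_i)=\sup_{i\in I}SO(u,v_i)$. $1$ is the neutral element of $SO$ if $SO(1,v)=v$ for all $v$. A fuzzy implication is a function $I:[0,1]^2\to[0,1]$ such that: $u\le v$ implies $I(v,w)\le I(u,w)$; $v\le w$ implies $I(u,v)\le I(u,w)$; $I(0,0)=1$; $I(1,1)=1$; $I(1,0)=0$. For a fuzzy implication $I$ (all quantifiers over $[0,1]$): (NP) $I(1,v)=v$; (LOP) $u\le v\Rightarrow I(u,v)=1$; (ROP) $I(u,v)=1\Rightarrow u\le v$; (OP) $u\le v\Leftrightarrow I(u,v)=1$; (EP) $I(u,I(v,w))=I(v,I(u,w))$; (IP) $I(u,u)=1$; (CB) $v\le I(u,v)$; (SIB) $I(u,v)\le I(u,I(u,v))$; (IB) $I(u,v)=I(u,I(u,v))$. *)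

theory Defs
  imports Main "HOL.Real"
begin


definition semi_overlap :: "(real \<Rightarrow> real \<Rightarrow> real) \<Rightarrow> bool" where
  "semi_overlap SO \<longleftrightarrow>
     (\<forall>u\<in>{0..1}. \<forall>v\<in>{0..1}. SO u v \<in> {0..1}) \<and>
     (\<forall>u\<in>{0..1}. \<forall>v\<in>{0..1}. SO u v = SO v u) \<and>
     (\<forall>u\<in>{0..1}. \<forall>v\<in>{0..1}. u * v = 0 \<longrightarrow> SO u v = 0) \<and>
     (\<forall>u\<in>{0..1}. \<forall>v\<in>{0..1}. u * v = 1 \<longrightarrow> SO u v = 1) \<and>
     (\<forall>u\<in>{0..1}. \<forall>v\<in>{0..1}. \<forall>w\<in>{0..1}. v \<le> w \<longrightarrow> SO u v \<le> SO u w) \<and>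
     (\<forall>u\<in>{0..1}. \<forall>V. V \<noteq> {} \<and> V \<subseteq> {0..1} \<longrightarrow> SO u (Sup V) = Sup (SO u ` V))"

definition neutral_one :: "(real \<Rightarrow> real \<Rightarrow> real) \<Rightarrow> bool" where
  "neutral_one SO \<longleftrightarrow> (\<forall>v\<in>{0..1}. SO 1 v = v)"

definition assoc_on_unit :: "(real \<Rightarrow> real \<Rightarrow> real) \<Rightarrow> bool" where
  "assoc_on_unit SO \<longleftrightarrow> (\<forall>u\<in>{0..1}. \<forall>v\<in>{0..1}. \<forall>w\<in>{0..1}. SO (SO u v) w = SO u (SO v w))"

definition fuzzy_implication :: "(real \<Rightarrow> real \<Rightarrow> real) \<Rightarrow> bool" where
  "fuzzy_implication I \<longleftrightarrow>
     (\<forall>u\<in>{0..1}. \<forall>v\<in>{0..1}. I u v \<in> {0..1}) \<and>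
     (\<forall>u\<in>{0..1}. \<forall>v\<in>{0..1}. \<forall>w\<in>{0..1}. u \<le> v \<longrightarrow> I v w \<le> I u w) \<and>
     (\<forall>u\<in>{0..1}. \<forall>v\<in>{0..1}. \<forall>w\<in>{0..1}. v \<le> w \<longrightarrow> I u v \<le> I u w) \<and>
     I 0 0 = 1 \<and> I 1 1 = 1 \<and> I 1 0 = 0"

definition res_impl :: "(real \<Rightarrow> real \<Rightarrow> real) \<Rightarrow> real \<Rightarrow> real \<Rightarrow> real" where
  "res_impl SO u v = Sup {w \<in> {0..1}. SO u w \<le> v}"

definition NP :: "(real \<Rightarrow> real \<Rightarrow> real) \<Rightarrow> bool" where
  "NP I \<longleftrightarrow> (\<forall>v\<in>{0..1}. I 1 v = v)"
definition LOP :: "(real \<Rightarrow> real \<Rightarrow> real) \<Rightarrow> bool" where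
  "LOP I \<longleftrightarrow> (\<forall>u\<in>{0..1}. \<forall>v\<in>{0..1}. u \<le> v \<longrightarrow> I u v = 1)"
definition ROP :: "(real \<Rightarrow> real \<Rightarrow> real) \<Rightarrow> bool" where
  "ROP I \<longleftrightarrow> (\<forall>u\<in>{0..1}. \<forall>v\<in>{0..1}. I u v = 1 \<longrightarrow> u \<le> v)"
definition OP :: "(real \<Rightarrow> real \<Rightarrow> real) \<Rightarrow> bool" where
  "OP I \<longleftrightarrow> (\<forall>u\<in>{0..1}. \<forall>v\<in>{0..1}. u \<le> v \<longleftrightarrow> I u v = 1)"
definition EP :: "(real \<Rightarrow> real \<Rightarrow> real) \<Rightarrow> bool" where
  "EP I \<longleftrightarrow> (\<forall>u\<in>{0..1}. \<forall>v\<in>{0..1}. \<forall>w\<in>{0..1}. I u (I v w) = I v (I u w))"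
definition IP :: "(real \<Rightarrow> real \<Rightarrow> real) \<Rightarrow> bool" where
  "IP I \<longleftrightarrow> (\<forall>u\<in>{0..1}. I u u = 1)"
definition CB :: "(real \<Rightarrow> real \<Rightarrow> real) \<Rightarrow> bool" where
  "CB I \<longleftrightarrow> (\<forall>u\<in>{0..1}. \<forall>v\<in>{0..1}. v \<le> I u v)"
definition SIB :: "(real \<Rightarrow> real \<Rightarrow> real) \<Rightarrow> bool" where
  "SIB I \<longleftrightarrow> (\<forall>u\<in>{0..1}. \<forall>v\<in>{0..1}. I u v \<le> I u (I u v))"
definition IB :: "(real \<Rightarrow> real \<Rightarrow> real) \<Rightarrow> bool" where
  "IB I \<longleftrightarrow> (\<forall>u\<in>{0..1}. \<forall>v\<in>{0..1}. I u v = I u (I u v))"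

end

theory Submission
  imports Defs
begin

lemma so_props:
  assumes "semi_overlap SO"
  shows "\<And>u v. u\<in>{0..1} \<Longrightarrow> v\<in>{0..1} \<Longrightarrow> SO u v \<in> {0..1}"
    and "\<And>u v. u\<in>{0..1} \<Longrightarrow> v\<in>{0..1} \<Longrightarrow> SO u v = SO v u"
    and "\<And>u. u\<in>{0..1} \<Longrightarrow> SO u 0 = 0"
    and "\<And>u v w. u\<in>{0..1} \<Longrightarrow> v\<in>{0..1} \<Longrightarrow> w\<in>{0..1} \<Longrightarrow> v \<le> w \<Longrightarrow> SO u v \<le> SO u w"
    and "\<And>u V. u\<in>{0..1} \<Longrightarrow> V \<noteq> {} \<Longrightarrow> V \<subseteq> {0..1} \<Longrightarrow> SO u (Sup V) = Sup (SO u ` V)"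
proof -
  have c1: "\<forall>u\<in>{0..1}. \<forall>v\<in>{0..1}. SO u v \<in> {0..1}"
   and c2: "\<forall>u\<in>{0..1}. \<forall>v\<in>{0..1}. SO u v = SO v u"
   and c3: "\<forall>u\<in>{0..1}. \<forall>v\<in>{0..1}. u * v = 0 \<longrightarrow> SO u v = 0"
   and c5: "\<forall>u\<in>{0..1}. \<forall>v\<in>{0..1}. \<forall>w\<in>{0..1}. v \<le> w \<longrightarrow> SO u v \<le> SO u w"
   and c6: "\<forall>u\<in>{0..1}. \<forall>V. V \<noteq> {} \<and> V \<subseteq> {0..1} \<longrightarrow> SO u (Sup V) = Sup (SO u ` V)"
    using assms unfolding semi_overlap_def by simp_all
  show "\<And>u v. u\<in>{0..1} \<Longrightarrow> v\<in>{0..1} \<Longrightarrow> SO u v \<in> {0..1}" using c1 by blast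
  show "\<And>u v. u\<in>{0..1} \<Longrightarrow> v\<in>{0..1} \<Longrightarrow> SO u v = SO v u" using c2 by blast
  show "\<And>u. u\<in>{0..1} \<Longrightarrow> SO u 0 = 0"
  proof -
    fix u :: real assume u: "u\<in>{0..1}"
    have z: "(0::real)\<in>{0..1}" by simp
    show "SO u 0 = 0" using bspec[OF bspec[OF c3 u] z] by simp
  qed
  show "\<And>u v w. u\<in>{0..1} \<Longrightarrow> v\<in>{0..1} \<Longrightarrow> w\<in>{0..1} \<Longrightarrow> v \<le> w \<Longrightarrow> SO u v \<le> SO u w" using c5 by blast
  show "\<And>u V. u\<in>{0..1} \<Longrightarrow> V \<noteq> {} \<Longrightarrow> V \<subseteq> {0..1} \<Longrightarrow> SO u (Sup V) = Sup (SO u ` V)" using c6 by blast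
qed

lemma res_in:
  assumes so: "semi_overlap SO" and u: "u\<in>{0..1}" and v: "v\<in>{0..1}"
  shows "res_impl SO u v \<in> {0..1}"
proof -
  let ?S = "{w \<in> {0..1}. SO u w \<le> v}"
  have z0: "(0::real) \<in> ?S" using so_props(3)[OF so u] v by (simp add: atLeastAtMost_iff)
  have bdd: "bdd_above ?S" by (rule bdd_aboveI[of _ 1]) auto
  have "0 \<le> Sup ?S" using cSup_upper[OF z0 bdd] .
  moreover have "Sup ?S \<le> 1" using z0 by (intro cSup_least) (blast, auto)
  ultimately show ?thesis unfolding res_impl_def by auto
qed

lemma resid:
  assumes so: "semi_overlap SO" and u: "u\<in>{0..1}" and v: "v\<in>{0..1}" and w: "w\<in>{0..1}"
  shows "SO u w \<le> v \<longleftrightarrow> w \<le> res_impl SO u v"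
proof -
  let ?S = "{w \<in> {0..1}. SO u w \<le> v}"
  have z0: "(0::real) \<in> ?S" using so_props(3)[OF so u] v by (simp add: atLeastAtMost_iff)
  have bdd: "bdd_above ?S" by (rule bdd_aboveI[of _ 1]) auto
  show ?thesis
  proof
    assume "SO u w \<le> v"
    then have "w \<in> ?S" using w by auto
    then show "w \<le> res_impl SO u v" unfolding res_impl_def using cSup_upper[OF _ bdd] by auto
  next
    assume h: "w \<le> res_impl SO u v"
    have r: "res_impl SO u v \<in> {0..1}" using res_in[OF so u v] .
    have "SO u w \<le> SO u (Sup ?S)" using so_props(4)[OF so u w] r h unfolding res_impl_def by auto
    also have "\<dots> = Sup (SO u ` ?S)" by (rule so_props(5)[OF so u]) (use z0 in blast, auto)
    also have "\<dots> \<le> v" using z0 by (intro cSup_least) (blast, auto)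
    finally show "SO u w \<le> v" .
  qed
qed

lemma eq_by_le:
  fixes a b :: real
  assumes "a\<in>{0..1}" "b\<in>{0..1}" "\<And>z. z\<in>{0..1} \<Longrightarrow> z \<le> a \<longleftrightarrow> z \<le> b"
  shows "a = b"
  using assms(3)[of a] assms(3)[of b] assms(1,2) by auto

theorem proposition3p10:
  fixes SO :: "real \<Rightarrow> real \<Rightarrow> real"
  assumes "semi_overlap SO"
    and "fuzzy_implication (res_impl SO)"
  shows "(\<forall>u\<in>{0..1}. \<forall>v\<in>{0..1}.
            SO u v \<in> {w \<in> {0..1}. res_impl SO u w \<ge> v} \<and>
            (\<forall>w\<in>{w \<in> {0..1}. res_impl SO u w \<ge> v}. SO u v \<le> w))
    \<and> (NP (res_impl SO) \<longleftrightarrow> neutral_one SO)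
    \<and> (EP (res_impl SO) \<longleftrightarrow> assoc_on_unit SO)
    \<and> (IP (res_impl SO) \<longleftrightarrow> (\<forall>u\<in>{0..1}. SO u 1 \<le> u))
    \<and> (LOP (res_impl SO) \<longleftrightarrow> (\<forall>u\<in>{0..1}. SO u 1 \<le> u))
    \<and> (ROP (res_impl SO) \<longleftrightarrow> (\<forall>u\<in>{0..1}. SO u 1 \<ge> u))
    \<and> (OP (res_impl SO) \<longleftrightarrow> neutral_one SO)
    \<and> (CB (res_impl SO) \<longleftrightarrow> (\<forall>u\<in>{0..1}. \<forall>v\<in>{0..1}. SO u v \<le> min u v))
    \<and> (CB (res_impl SO) \<longrightarrow> SIB (res_impl SO))
    \<and> ((\<forall>u\<in>{0..1}. \<forall>v\<in>{0..1}. SO u v = min u v) \<longrightarrow> IB (res_impl SO))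
    \<and> (neutral_one SO \<longrightarrow> CB (res_impl SO))"
proof -
  note so = assms(1)
  note R = resid[OF so]
  note RI = res_in[OF so]
  note S01 = so_props(1)[OF so]
  note com = so_props(2)[OF so]
  let ?I = "res_impl SO"
  have one: "\<And>u v. u\<in>{0..1} \<Longrightarrow> v\<in>{0..1} \<Longrightarrow> ?I u v = 1 \<longleftrightarrow> SO u 1 \<le> v"
  proof -
    fix u v :: real assume u: "u\<in>{0..1}" and v: "v\<in>{0..1}"
    show "?I u v = 1 \<longleftrightarrow> SO u 1 \<le> v" using R[OF u v, of 1] RI[OF u v] by auto
  qed
  have p1: "\<forall>u\<in>{0..1}. \<forall>v\<in>{0..1}.
            SO u v \<in> {w \<in> {0..1}. ?I u w \<ge> v} \<and>
            (\<forall>w\<in>{w \<in> {0..1}. ?I u w \<ge> v}. SO u v \<le> w)"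
  proof (intro ballI conjI)
    fix u v :: real assume u: "u\<in>{0..1}" and v: "v\<in>{0..1}"
    show "SO u v \<in> {w \<in> {0..1}. ?I u w \<ge> v}" using R[OF u S01[OF u v] v] S01[OF u v] by auto
    fix w :: real assume "w \<in> {w \<in> {0..1}. ?I u w \<ge> v}"
    then show "SO u v \<le> w" using R[OF u _ v, of w] by auto
  qed
  have p2: "NP ?I \<longleftrightarrow> neutral_one SO"
  proof
    assume np: "NP ?I"
    show "neutral_one SO" unfolding neutral_one_def
    proof
      fix w :: real assume w: "w\<in>{0..1}"
      have 1: "(1::real)\<in>{0..1}" by simp
      have s: "SO 1 w \<in> {0..1}" using S01[OF 1 w] .
      have "SO 1 w \<le> w" using R[OF 1 w w] np w unfolding NP_def by auto
      moreover have "w \<le> SO 1 w" using R[OF 1 s w] np s unfolding NP_def by auto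
      ultimately show "SO 1 w = w" by auto
    qed
  next
    assume n: "neutral_one SO"
    show "NP ?I" unfolding NP_def
    proof
      fix v :: real assume v: "v\<in>{0..1}"
      have 1: "(1::real)\<in>{0..1}" by simp
      show "?I 1 v = v"
        by (rule sym, rule eq_by_le[OF v RI[OF 1 v]]) (use R[OF 1 v] n in \<open>auto simp: neutral_one_def\<close>)
    qed
  qed
  have C: "EP ?I \<longleftrightarrow> (\<forall>a\<in>{0..1}. \<forall>b\<in>{0..1}. \<forall>c\<in>{0..1}. SO a (SO b c) = SO b (SO a c))"
  proof
    assume ep: "EP ?I"
    show "\<forall>a\<in>{0..1}. \<forall>b\<in>{0..1}. \<forall>c\<in>{0..1}. SO a (SO b c) = SO b (SO a c)"
    proof (intro ballI)
      fix a b c :: real assume a: "a\<in>{0..1}" and b: "b\<in>{0..1}" and c: "c\<in>{0..1}"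
      have key: "SO x (SO y z) \<le> w \<longleftrightarrow> SO y (SO x z) \<le> w"
        if "x\<in>{0..1}" "y\<in>{0..1}" "z\<in>{0..1}" "w\<in>{0..1}" for x y z w :: real
      proof -
        note x = that(1) and y = that(2) and z = that(3) and w = that(4)
        have "SO x (SO y z) \<le> w \<longleftrightarrow> SO y z \<le> ?I x w" using R[OF x w S01[OF y z]] by simp
        also have "\<dots> \<longleftrightarrow> z \<le> ?I y (?I x w)" using R[OF y RI[OF x w] z] by simp
        also have "\<dots> \<longleftrightarrow> z \<le> ?I x (?I y w)" using ep x y w unfolding EP_def by auto
        also have "\<dots> \<longleftrightarrow> SO x z \<le> ?I y w" using R[OF x RI[OF y w] z] by simp
        also have "\<dots> \<longleftrightarrow> SO y (SO x z) \<le> w" using R[OF y w S01[OF x z]] by simp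
        finally show "SO x (SO y z) \<le> w \<longleftrightarrow> SO y (SO x z) \<le> w" .
      qed
      have s1: "SO a (SO b c) \<in> {0..1}" using S01 a b c by auto
      have s2: "SO b (SO a c) \<in> {0..1}" using S01 a b c by auto
      show "SO a (SO b c) = SO b (SO a c)"
        using key[OF a b c s1] key[OF a b c s2] by auto
    qed
  next
    assume h: "\<forall>a\<in>{0..1}. \<forall>b\<in>{0..1}. \<forall>c\<in>{0..1}. SO a (SO b c) = SO b (SO a c)"
    show "EP ?I" unfolding EP_def
    proof (intro ballI)
      fix x y w :: real assume x: "x\<in>{0..1}" and y: "y\<in>{0..1}" and w: "w\<in>{0..1}"
      show "?I x (?I y w) = ?I y (?I x w)"
      proof (rule eq_by_le[OF RI[OF x RI[OF y w]] RI[OF y RI[OF x w]]])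
        fix z :: real assume z: "z\<in>{0..1}"
        have "z \<le> ?I x (?I y w) \<longleftrightarrow> SO x z \<le> ?I y w" using R[OF x RI[OF y w] z] by simp
        also have "\<dots> \<longleftrightarrow> SO y (SO x z) \<le> w" using R[OF y w S01[OF x z]] by simp
        also have "\<dots> \<longleftrightarrow> SO x (SO y z) \<le> w" using h x y z by auto
        also have "\<dots> \<longleftrightarrow> SO y z \<le> ?I x w" using R[OF x w S01[OF y z]] by simp
        also have "\<dots> \<longleftrightarrow> z \<le> ?I y (?I x w)" using R[OF y RI[OF x w] z] by simp
        finally show "z \<le> ?I x (?I y w) \<longleftrightarrow> z \<le> ?I y (?I x w)" .
      qed
    qed
  qed
  have p3: "EP ?I \<longleftrightarrow> assoc_on_unit SO"
    unfolding C assoc_on_unit_def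
  proof
    assume h: "\<forall>a\<in>{0..1}. \<forall>b\<in>{0..1}. \<forall>c\<in>{0..1}. SO a (SO b c) = SO b (SO a c)"
    show "\<forall>u\<in>{0..1}. \<forall>v\<in>{0..1}. \<forall>w\<in>{0..1}. SO (SO u v) w = SO u (SO v w)"
    proof (intro ballI)
      fix u v w :: real assume u: "u\<in>{0..1}" and v: "v\<in>{0..1}" and w: "w\<in>{0..1}"
      have "SO u (SO v w) = SO u (SO w v)" using com v w by simp
      also have "\<dots> = SO w (SO u v)" using h u v w by auto
      also have "\<dots> = SO (SO u v) w" using com[OF w S01[OF u v]] by simp
      finally show "SO (SO u v) w = SO u (SO v w)" by simp
    qed
  next
    assume h: "\<forall>u\<in>{0..1}. \<forall>v\<in>{0..1}. \<forall>w\<in>{0..1}. SO (SO u v) w = SO u (SO v w)"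
    show "\<forall>a\<in>{0..1}. \<forall>b\<in>{0..1}. \<forall>c\<in>{0..1}. SO a (SO b c) = SO b (SO a c)"
    proof (intro ballI)
      fix a b c :: real assume a: "a\<in>{0..1}" and b: "b\<in>{0..1}" and c: "c\<in>{0..1}"
      have "SO a (SO b c) = SO (SO a b) c" using h a b c by auto
      also have "\<dots> = SO (SO b a) c" using com a b by simp
      also have "\<dots> = SO b (SO a c)" using h a b c by auto
      finally show "SO a (SO b c) = SO b (SO a c)" .
    qed
  qed
  have p4: "IP ?I \<longleftrightarrow> (\<forall>u\<in>{0..1}. SO u 1 \<le> u)"
  proof
    assume h: "IP ?I"
    show "\<forall>u\<in>{0..1}. SO u 1 \<le> u"
    proof
      fix u :: real assume u: "u\<in>{0..1}"
      have "?I u u = 1" using h u unfolding IP_def by blast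
      then show "SO u 1 \<le> u" using one[OF u u] by blast
    qed
  next
    assume h: "\<forall>u\<in>{0..1}. SO u 1 \<le> u"
    show "IP ?I" unfolding IP_def
    proof
      fix u :: real assume u: "u\<in>{0..1}"
      have "SO u 1 \<le> u" using h u by blast
      then show "?I u u = 1" using one[OF u u] by blast
    qed
  qed
  have p5: "LOP ?I \<longleftrightarrow> (\<forall>u\<in>{0..1}. SO u 1 \<le> u)"
  proof
    assume h: "LOP ?I"
    have "IP ?I" unfolding IP_def
    proof
      fix u :: real assume u: "u\<in>{0..1}"
      show "?I u u = 1" using h u unfolding LOP_def by blast
    qed
    then show "\<forall>u\<in>{0..1}. SO u 1 \<le> u" using p4 by blast
  next
    assume h: "\<forall>u\<in>{0..1}. SO u 1 \<le> u"
    show "LOP ?I" unfolding LOP_def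
    proof (intro ballI impI)
      fix u v :: real assume u: "u\<in>{0..1}" and v: "v\<in>{0..1}" and uv: "u \<le> v"
      have "SO u 1 \<le> u" using h u by blast
      then show "?I u v = 1" using one[OF u v] uv by linarith
    qed
  qed
  have p6: "ROP ?I \<longleftrightarrow> (\<forall>u\<in>{0..1}. SO u 1 \<ge> u)"
  proof
    assume h: "ROP ?I"
    show "\<forall>u\<in>{0..1}. SO u 1 \<ge> u"
    proof
      fix u :: real assume u: "u\<in>{0..1}"
      have s: "SO u 1 \<in> {0..1}" using S01[OF u] by simp
      have "?I u (SO u 1) = 1" using one[OF u s] by simp
      then show "SO u 1 \<ge> u" using h s u unfolding ROP_def by blast
    qed
  next
    assume h: "\<forall>u\<in>{0..1}. SO u 1 \<ge> u"
    show "ROP ?I" unfolding ROP_def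
    proof (intro ballI impI)
      fix u v :: real assume u: "u\<in>{0..1}" and v: "v\<in>{0..1}" and e: "?I u v = 1"
      have "SO u 1 \<le> v" using one[OF u v] e by blast
      moreover have "u \<le> SO u 1" using h u by blast
      ultimately show "u \<le> v" by linarith
    qed
  qed
  have p7: "OP ?I \<longleftrightarrow> neutral_one SO"
  proof -
    have "OP ?I \<longleftrightarrow> LOP ?I \<and> ROP ?I" unfolding OP_def LOP_def ROP_def by blast
    also have "\<dots> \<longleftrightarrow> (\<forall>u\<in>{0..1}. SO u 1 = u)" 
    proof
      assume "LOP ?I \<and> ROP ?I"
      then have a: "\<forall>u\<in>{0..1}. SO u 1 \<le> u" and b: "\<forall>u\<in>{0..1}. SO u 1 \<ge> u" using p5 p6 by blast+
      show "\<forall>u\<in>{0..1}. SO u 1 = u"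
      proof
        fix u :: real assume "u\<in>{0..1}"
        then show "SO u 1 = u" using a b by (meson antisym)
      qed
    next
      assume a: "\<forall>u\<in>{0..1}. SO u 1 = u"
      have "\<forall>u\<in>{0..1}. SO u 1 \<le> u" "\<forall>u\<in>{0..1}. SO u 1 \<ge> u" using a by simp_all
      then show "LOP ?I \<and> ROP ?I" using p5 p6 by blast
    qed
    also have "\<dots> \<longleftrightarrow> neutral_one SO" unfolding neutral_one_def
    proof (intro ball_cong refl)
      fix u :: real assume u: "u\<in>{0..1}"
      have "SO u 1 = SO 1 u" using com[OF u] by simp
      then show "(SO u 1 = u) = (SO 1 u = u)" by simp
    qed
    finally show ?thesis .
  qed
  have cb: "CB ?I \<longleftrightarrow> (\<forall>u\<in>{0..1}. \<forall>v\<in>{0..1}. SO u v \<le> v)"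
    unfolding CB_def
  proof (intro ball_cong refl)
    fix u v :: real assume u: "u\<in>{0..1}" and v: "v\<in>{0..1}"
    show "(v \<le> ?I u v) = (SO u v \<le> v)" using R[OF u v v] by simp
  qed
  have p8: "CB ?I \<longleftrightarrow> (\<forall>u\<in>{0..1}. \<forall>v\<in>{0..1}. SO u v \<le> min u v)"
    unfolding cb
  proof
    assume h: "\<forall>u\<in>{0..1}. \<forall>v\<in>{0..1}. SO u v \<le> v"
    show "\<forall>u\<in>{0..1}. \<forall>v\<in>{0..1}. SO u v \<le> min u v"
    proof (intro ballI)
      fix u v :: real assume u: "u\<in>{0..1}" and v: "v\<in>{0..1}"
      have "SO u v \<le> v" using h u v by auto
      moreover have "SO v u \<le> u" using h u v by auto
      ultimately show "SO u v \<le> min u v" using com[OF u v] by simp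
    qed
  qed auto
  have p9: "CB ?I \<longrightarrow> SIB ?I"
  proof
    assume h: "CB ?I"
    show "SIB ?I" unfolding SIB_def
    proof (intro ballI)
      fix u v :: real assume u: "u\<in>{0..1}" and v: "v\<in>{0..1}"
      show "?I u v \<le> ?I u (?I u v)" using h u RI[OF u v] unfolding CB_def by blast
    qed
  qed
  have p10: "(\<forall>u\<in>{0..1}. \<forall>v\<in>{0..1}. SO u v = min u v) \<longrightarrow> IB ?I"
  proof
    assume h: "\<forall>u\<in>{0..1}. \<forall>v\<in>{0..1}. SO u v = min u v"
    show "IB ?I" unfolding IB_def
    proof (intro ballI)
      fix u v :: real assume u: "u\<in>{0..1}" and v: "v\<in>{0..1}"
      show "?I u v = ?I u (?I u v)"
      proof (rule eq_by_le[OF RI[OF u v] RI[OF u RI[OF u v]]])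
        fix z :: real assume z: "z\<in>{0..1}"
        have "z \<le> ?I u (?I u v) \<longleftrightarrow> SO u z \<le> ?I u v" using R[OF u RI[OF u v] z] by simp
        also have "\<dots> \<longleftrightarrow> SO u (SO u z) \<le> v" using R[OF u v S01[OF u z]] by simp
        also have "\<dots> \<longleftrightarrow> SO u z \<le> v" using h u z S01[OF u z] by auto
        also have "\<dots> \<longleftrightarrow> z \<le> ?I u v" using R[OF u v z] by simp
        finally show "z \<le> ?I u v \<longleftrightarrow> z \<le> ?I u (?I u v)" by simp
      qed
    qed
  qed
  have p11: "neutral_one SO \<longrightarrow> CB ?I"
  proof
    assume n: "neutral_one SO"
    have "\<forall>u\<in>{0..1}. \<forall>v\<in>{0..1}. SO u v \<le> v"
    proof (intro ballI)
      fix u v :: real assume u: "u\<in>{0..1}" and v: "v\<in>{0..1}"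
      have "SO u v = SO v u" using com u v by simp
      also have "\<dots> \<le> SO v 1" using so_props(4)[OF so v u] u by auto
      also have "\<dots> = SO 1 v" using com v by simp
      also have "\<dots> = v" using n v unfolding neutral_one_def by auto
      finally show "SO u v \<le> v" .
    qed
    then show "CB ?I" using cb by simp
  qed
  show ?thesis using p1 p2 p3 p4 p5 p6 p7 p8 p9 p10 p11 by blast
qed

end
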